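(* Let $n\geq1$ and $\lambda=(\lambda_1,\dots,\lambda_n)\in\mathbb{R}^n$. Then $\sum_{P\in\mathcal{P}_{ord}(\lambda)}(-1)^{|P|}$ equals $(-1)^n$ if $\lambda_r>0$ for all $r\in\{1,\dots,n\}$, and $0$ otherwise.
   Context: An ordered partition of $\{1,\dots,n\}$ is a sequence $P=(I_1,\dots,I_k)$ of nonempty pairwise disjoint subsets with union $\{1,\dots,n\}$, and $|P|=k$. For $J\subset\{1,\dots,n\}$, $s_J(\lambda)=\sum_{i\in J}\lambda_i$. $\mathcal{P}_{ord}(\lambda)$ is the set of ordered partitions $P=(I_1,\dots,I_k)$ such that $s_{I_1}(\lambda)+\dots+s_{I_i}(\lambda)>0$ for all $i\in\{1,\dots,k\}$. *)

theory Defs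
  imports Complex_Main
begin

definition ordered_partition :: "nat \<Rightarrow> nat set list \<Rightarrow> bool" where
  "ordered_partition n P \<longleftrightarrow>
     (\<forall>i < length P. P ! i \<noteq> {}) \<and>
     (\<forall>i < length P. \<forall>j < length P. i \<noteq> j \<longrightarrow> P ! i \<inter> P ! j = {}) \<and>
     \<Union> (set P) = {1..n}"

definition s_J :: "nat set \<Rightarrow> (nat \<Rightarrow> real) \<Rightarrow> real" where
  "s_J J lam = (\<Sum>i\<in>J. lam i)"

definition P_ord :: "nat \<Rightarrow> (nat \<Rightarrow> real) \<Rightarrow> nat set list set" where
  "P_ord n lam = {P. ordered_partition n P \<and>
      (\<forall>i \<in> {1..length P}. (\<Sum>j<i. s_J (P ! j) lam) > 0)}"

end

theory Submission
  imports Defs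
begin


lemma alt_sum:
  assumes "finite S"
  shows "(\<Sum>A\<in>Pow S. (-1::int) ^ card A) = (if S = {} then 1 else 0)"
proof -
  have "(\<Prod>x\<in>S. (1::int) - 1) = (\<Sum>X\<in>Pow S. (-1) ^ card X * (\<Prod>x\<in>X. 1) * (\<Prod>x\<in>S-X. 1))"
    by (rule prod_diff_conv_sum[OF assms])
  then have "(\<Sum>A\<in>Pow S. (-1::int) ^ card A) = 0 ^ card S" by simp
  then show ?thesis using assms by (simp add: power_0_left card_eq_0_iff)
qed

definition Q :: "nat set \<Rightarrow> (nat \<Rightarrow> real) \<Rightarrow> nat set list set" where
  "Q S lam = {P. (\<forall>i < length P. P ! i \<noteq> {}) \<and>
     (\<forall>i < length P. \<forall>j < length P. i \<noteq> j \<longrightarrow> P ! i \<inter> P ! j = {}) \<and>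
     \<Union> (set P) = S \<and> (\<forall>i \<in> {1..length P}. (\<Sum>j<i. s_J (P ! j) lam) > 0)}"

lemma P_ord_Q: "P_ord n lam = Q {1..n} lam"
  unfolding P_ord_def Q_def ordered_partition_def by auto

lemma sum_blocks:
  assumes "finite (\<Union>(set P))"
    and "\<forall>i < length P. \<forall>j < length P. i \<noteq> j \<longrightarrow> P ! i \<inter> P ! j = {}"
  shows "(\<Sum>j<length P. s_J (P ! j) lam) = s_J (\<Union>(set P)) lam"
proof -
  have U: "\<Union>(set P) = (\<Union>j\<in>{..<length P}. P ! j)"
    unfolding set_conv_nth by auto
  have fin: "\<forall>j\<in>{..<length P}. finite (P ! j)"
  proof
    fix j assume "j \<in> {..<length P}"
    then have "P ! j \<in> set P" by simp
    then have "P ! j \<subseteq> \<Union>(set P)" by blast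
    then show "finite (P ! j)" using assms(1) finite_subset by blast
  qed
  show ?thesis unfolding U s_J_def
    by (subst sum.UNION_disjoint) (use fin assms(2) in auto)
qed

lemma Q_empty: "Q {} lam = {[]}"
proof -
  have "P = []" if PQ: "P \<in> Q {} lam" for P
  proof (rule ccontr)
    assume "P \<noteq> []"
    then have l: "0 < length P" by simp
    then have "P ! 0 \<in> set P" by simp
    moreover have "P ! 0 \<noteq> {}" using PQ l unfolding Q_def by blast
    moreover have "\<Union> (set P) = {}" using PQ unfolding Q_def by auto
    ultimately show False by blast
  qed
  moreover have "[] \<in> Q {} lam" unfolding Q_def by auto
  ultimately show ?thesis by blast
qed

lemma Q_step:
  assumes "finite S" "S \<noteq> {}"
  shows "Q S lam = (if s_J S lam > 0 then
            (\<lambda>(B,P). P @ [B]) ` (SIGMA B:{B. B \<subseteq> S \<and> B \<noteq> {}}. Q (S - B) lam) else {})"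
proof -
  have fwd: "P \<in> (\<lambda>(B,P). P @ [B]) ` (SIGMA B:{B. B \<subseteq> S \<and> B \<noteq> {}}. Q (S - B) lam) \<and> s_J S lam > 0"
    if PQ: "P \<in> Q S lam" for P
  proof -
    have ne: "\<forall>i < length P. P ! i \<noteq> {}"
      and dj: "\<forall>i < length P. \<forall>j < length P. i \<noteq> j \<longrightarrow> P ! i \<inter> P ! j = {}"
      and un: "\<Union> (set P) = S"
      and pos: "\<forall>i \<in> {1..length P}. (\<Sum>j<i. s_J (P ! j) lam) > 0"
      using PQ unfolding Q_def by auto
    have "P \<noteq> []" using un assms(2) by auto
    then obtain P' B where PB: "P = P' @ [B]" using rev_exhaust by blast
    have sS: "s_J S lam > 0"
      using pos[rule_format, of "length P"] sum_blocks[of P lam] un dj assms(1) PB by auto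
    have Bne: "B \<noteq> {}" using ne[rule_format, of "length P'"] PB by simp
    have BS: "B \<subseteq> S" using un PB by auto
    have ne': "\<forall>i < length P'. P' ! i \<noteq> {}"
    proof (intro allI impI)
      fix i assume "i < length P'"
      then show "P' ! i \<noteq> {}" using ne[rule_format, of i] PB by (simp add: nth_append)
    qed
    have dj': "\<forall>i < length P'. \<forall>j < length P'. i \<noteq> j \<longrightarrow> P' ! i \<inter> P' ! j = {}"
    proof (intro allI impI)
      fix i j assume "i < length P'" "j < length P'" "i \<noteq> j"
      then show "P' ! i \<inter> P' ! j = {}" using dj[rule_format, of i j] PB by (simp add: nth_append)
    qed
    have djB: "\<forall>i < length P'. P' ! i \<inter> B = {}"
    proof (intro allI impI)
      fix i assume "i < length P'"
      then show "P' ! i \<inter> B = {}" using dj[rule_format, of i "length P'"] PB by (simp add: nth_append)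
    qed
    have un': "\<Union> (set P') = S - B"
    proof -
      have "\<Union> (set P') \<inter> B = {}" using djB unfolding set_conv_nth by auto
      then show ?thesis using un PB by auto
    qed
    have pos': "\<forall>i \<in> {1..length P'}. (\<Sum>j<i. s_J (P' ! j) lam) > 0"
    proof
      fix i assume i: "i \<in> {1..length P'}"
      have "(\<Sum>j<i. s_J (P' ! j) lam) = (\<Sum>j<i. s_J (P ! j) lam)"
        using i PB by (intro sum.cong) (auto simp: nth_append)
      then show "(\<Sum>j<i. s_J (P' ! j) lam) > 0" using pos i PB by auto
    qed
    have "P' \<in> Q (S - B) lam" unfolding Q_def using ne' dj' un' pos' by blast
    then show ?thesis using PB Bne BS sS by force
  qed
  have bwd: "P' @ [B] \<in> Q S lam"
    if sS: "s_J S lam > 0" and BS: "B \<subseteq> S" and Bne: "B \<noteq> {}" and PQ: "P' \<in> Q (S - B) lam" for P' B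
  proof -
    have ne: "\<forall>i < length P'. P' ! i \<noteq> {}"
      and dj: "\<forall>i < length P'. \<forall>j < length P'. i \<noteq> j \<longrightarrow> P' ! i \<inter> P' ! j = {}"
      and un: "\<Union> (set P') = S - B"
      and pos: "\<forall>i \<in> {1..length P'}. (\<Sum>j<i. s_J (P' ! j) lam) > 0"
      using PQ unfolding Q_def by auto
    let ?P = "P' @ [B]"
    have djB: "\<forall>i < length P'. P' ! i \<inter> B = {}"
      using un by (auto simp: set_conv_nth)
    have ne2: "\<forall>i < length ?P. ?P ! i \<noteq> {}"
      using ne Bne by (auto simp: nth_append less_Suc_eq)
    have dj2: "\<forall>i < length ?P. \<forall>j < length ?P. i \<noteq> j \<longrightarrow> ?P ! i \<inter> ?P ! j = {}"
      using dj djB by (auto simp: nth_append less_Suc_eq)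
    have un2: "\<Union> (set ?P) = S" using un BS by auto
    have pos2: "\<forall>i \<in> {1..length ?P}. (\<Sum>j<i. s_J (?P ! j) lam) > 0"
    proof
      fix i assume i: "i \<in> {1..length ?P}"
      show "(\<Sum>j<i. s_J (?P ! j) lam) > 0"
      proof (cases "i = length ?P")
        case True
        have "finite B" using BS assms(1) finite_subset by blast
        moreover have "finite (\<Union> (set P'))" using un assms(1) by simp
        ultimately show ?thesis using True sum_blocks[of ?P lam] un2 dj2 assms(1) sS by simp
      next
        case False
        then have "i \<in> {1..length P'}" using i by auto
        moreover have "(\<Sum>j<i. s_J (P' ! j) lam) = (\<Sum>j<i. s_J (?P ! j) lam)"
          using False i by (intro sum.cong) (auto simp: nth_append)
        ultimately show ?thesis using pos by (metis atLeastAtMost_iff)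
      qed
    qed
    show ?thesis unfolding Q_def using ne2 dj2 un2 pos2 by blast
  qed
  show ?thesis
  proof (cases "s_J S lam > 0")
    case True
    then show ?thesis using fwd bwd by auto
  next
    case False
    then show ?thesis using fwd by auto
  qed
qed


definition G :: "nat set \<Rightarrow> (nat \<Rightarrow> real) \<Rightarrow> int" where
  "G S lam = (if \<forall>r\<in>S. lam r > 0 then (-1) ^ card S else 0)"

lemma G_sum:
  assumes "finite S" "\<exists>r\<in>S. lam r > 0"
  shows "(\<Sum>A\<in>Pow S. G A lam) = 0"
proof -
  let ?Pos = "{r\<in>S. lam r > 0}"
  have "(\<Sum>A\<in>Pow S. G A lam) = (\<Sum>A\<in>Pow ?Pos. G A lam)"
    by (rule sum.mono_neutral_right) (use assms(1) in \<open>auto simp: G_def\<close>)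
  also have "\<dots> = (\<Sum>A\<in>Pow ?Pos. (-1::int) ^ card A)"
    by (rule sum.cong) (auto simp: G_def)
  also have "\<dots> = 0" using assms by (subst alt_sum) auto
  finally show ?thesis .
qed

lemma main_gen:
  assumes "finite S"
  shows "finite (Q S lam) \<and> (\<Sum>P\<in>Q S lam. (-1::int) ^ length P) = G S lam"
  using assms
proof (induct S rule: finite_psubset_induct)
  case (psubset S)
  show ?case
  proof (cases "S = {}")
    case True
    then show ?thesis by (simp add: Q_empty G_def)
  next
    case Sne: False
    show ?thesis
    proof (cases "s_J S lam > 0")
      case False
      have "\<not> (\<forall>r\<in>S. lam r > 0)"
      proof
        assume "\<forall>r\<in>S. lam r > 0"
        then have "s_J S lam > 0" unfolding s_J_def using psubset.hyps Sne by (intro sum_pos) auto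
        then show False using False by simp
      qed
      then show ?thesis using Q_step[OF psubset.hyps(1) Sne, of lam] False by (simp add: G_def)
    next
      case True
      define Bs where "Bs = {B. B \<subseteq> S \<and> B \<noteq> {}}"
      define Sg where "Sg = (SIGMA B:Bs. Q (S - B) lam)"
      have QS: "Q S lam = (\<lambda>(B,P). P @ [B]) ` Sg"
        using Q_step[OF psubset.hyps(1) Sne, of lam] True unfolding Sg_def Bs_def by simp
      have finBs: "finite Bs" unfolding Bs_def using psubset.hyps(1) by simp
      have IH: "finite (Q (S - B) lam) \<and> (\<Sum>P\<in>Q (S - B) lam. (-1::int) ^ length P) = G (S - B) lam"
        if "B \<in> Bs" for B
        using psubset.hyps(2)[of "S - B"] that psubset.hyps(1) unfolding Bs_def by blast
      have finSg: "finite Sg" unfolding Sg_def using finBs IH by (intro finite_SigmaI) auto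
      have inj: "inj_on (\<lambda>(B,P). P @ [B]) Sg"
        by (auto simp: inj_on_def)
      have "(\<Sum>P\<in>Q S lam. (-1::int) ^ length P) = (\<Sum>(B,P)\<in>Sg. (-1::int) ^ length (P @ [B]))"
        unfolding QS by (subst sum.reindex[OF inj]) (simp add: case_prod_unfold)
      also have "\<dots> = (\<Sum>(B,P)\<in>Sg. - ((-1::int) ^ length P))"
        by (rule sum.cong) auto
      also have "\<dots> = (\<Sum>B\<in>Bs. \<Sum>P\<in>Q (S - B) lam. - ((-1::int) ^ length P))"
        unfolding Sg_def using finBs IH by (subst sum.Sigma) auto
      also have "\<dots> = (\<Sum>B\<in>Bs. - G (S - B) lam)"
        using IH by (intro sum.cong) (auto simp: sum_negf)
      also have "\<dots> = - (\<Sum>B\<in>Bs. G (S - B) lam)"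
        by (simp add: sum_negf)
      also have "(\<Sum>B\<in>Bs. G (S - B) lam) = (\<Sum>A\<in>Pow S - {S}. G A lam)"
        by (rule sum.reindex_bij_witness[of _ "\<lambda>A. S - A" "\<lambda>A. S - A"]) (auto simp: Bs_def)
      also have "\<dots> = (\<Sum>A\<in>Pow S. G A lam) - G S lam"
        using psubset.hyps(1) by (subst sum_diff1) auto
      also have "(\<Sum>A\<in>Pow S. G A lam) = 0"
      proof (rule G_sum[OF psubset.hyps(1)])
        show "\<exists>r\<in>S. lam r > 0"
        proof (rule ccontr)
          assume "\<not> (\<exists>r\<in>S. lam r > 0)"
          then have "s_J S lam \<le> 0" unfolding s_J_def by (intro sum_nonpos) auto
          then show False using True by simp
        qed
      qed
      finally have "(\<Sum>P\<in>Q S lam. (-1::int) ^ length P) = G S lam" by simp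
      moreover have "finite (Q S lam)" unfolding QS using finSg by simp
      ultimately show ?thesis by simp
    qed
  qed
qed

theorem mainTheorem5:
  fixes n :: nat and lam :: "nat \<Rightarrow> real"
  assumes "n \<ge> 1"
  shows "(\<Sum>P\<in>P_ord n lam. (-1::int) ^ length P) =
           (if (\<forall>r\<in>{1..n}. lam r > 0) then (-1) ^ n else 0)"
  using main_gen[of "{1..n}" lam] unfolding P_ord_Q G_def by simp

end
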